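(* Assume (A1). Let $g:\mathcal X\to\{0,1\}$ and let $u$ be the solution of problem (P) with boundary data $g|_\Gamma$. Let $k$ be the smallest integer strictly larger than $$\frac{2\log 2}{1-\alpha+2\alpha\delta}=\frac{2(p-1)\log 2}{p-2+2\delta}.$$ Then every $x\in\mathcal X\setminus A_k$ is classified correctly, i.e. $g(x)=\mathbb 1_{u(x)\ge 1/2}$.
   Context: $\mathcal X$ is a finite vertex set and $W=(w_{xy})$ a symmetric matrix of nonnegative weights defining a connected graph, with degrees $d_x=\sum_{y}w_{xy}$ and neighbor sets $N_x=\{y\in\mathcal X:w_{xy}>0\}$. For $p\ge2$, $\alpha=1/(p-1)$, and $$\mathcal L_p u(x)=\alpha\,\frac{1}{d_x}\sum_{y}w_{xy}\big(u(x)-u(y)\big)+(1-\alpha)\Big(u(x)-\tfrac12\big(\max_{N_x}u+\min_{N_x}u\big)\Big).$$ $\Gamma\subset\mathcal X$ is the set of labeled vertices. Problem (P): find $u:\mathcal X\to\mathbb R$ with $\mathcal L_pu(x)=0$ for $x\in\mathcal X\setminus\Gamma$ and $u=g$ on $\Gamma$; it has a unique solution. Assumption (A1): $\Gamma\cap N_x\neq\varnothing$ for every $x\in\mathcal X$. $\delta=\min_{x\in\mathcal X}\frac{\sum_{y}w_{xy}\mathbb 1_{y\in\Gamma}}{\sum_{z}w_{xz}}$. The graph distance $\operatorname{dist}(x,y)$ is the number of edges of a shortest path from $x$ to $y$, and $\operatorname{dist}(x,A)=\min_{y\in A}\operatorname{dist}(x,y)$ (taken to be $+\infty$ if $A=\varnothing$).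 For $i=0,1$ let $\mathcal X_i=\{x\in\mathcal X:g(x)=i\}$, and for an integer $m\ge0$, $A_m^i=\{x\in\mathcal X_i:\operatorname{dist}(x,\mathcal X_{1-i})\le m\}$, $A_m=A_m^0\cup A_m^1$. *)

theory Defs
  imports Complex_Main "HOL-Library.Extended_Nat"
begin

definition deg :: "('a::finite \<Rightarrow> 'a \<Rightarrow> real) \<Rightarrow> 'a \<Rightarrow> real" where
  "deg w x = (\<Sum>y\<in>UNIV. w x y)"

definition nbrs :: "('a \<Rightarrow> 'a \<Rightarrow> real) \<Rightarrow> 'a \<Rightarrow> 'a set" where
  "nbrs w x = {y. w x y > 0}"

definition walk :: "('a \<Rightarrow> 'a \<Rightarrow> real) \<Rightarrow> 'a \<Rightarrow> 'a \<Rightarrow> nat \<Rightarrow> bool" where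
  "walk w x y n \<longleftrightarrow> (\<exists>f::nat \<Rightarrow> 'a. f 0 = x \<and> f n = y \<and> (\<forall>i<n. w (f i) (f (Suc i)) > 0))"

definition connected_graph :: "('a \<Rightarrow> 'a \<Rightarrow> real) \<Rightarrow> bool" where
  "connected_graph w \<longleftrightarrow> (\<forall>x y. \<exists>n. walk w x y n)"

definition gdist :: "('a \<Rightarrow> 'a \<Rightarrow> real) \<Rightarrow> 'a \<Rightarrow> 'a \<Rightarrow> nat" where
  "gdist w x y = (LEAST n. walk w x y n)"

text \<open>Distance to a set (infinity for the empty set).\<close>
definition setdist :: "('a \<Rightarrow> 'a \<Rightarrow> real) \<Rightarrow> 'a \<Rightarrow> 'a set \<Rightarrow> enat" where
  "setdist w x A = (INF y\<in>A. enat (gdist w x y))"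

definition Lp :: "real \<Rightarrow> ('a::finite \<Rightarrow> 'a \<Rightarrow> real) \<Rightarrow> ('a \<Rightarrow> real) \<Rightarrow> 'a \<Rightarrow> real" where
  "Lp p w u x = (let \<alpha> = 1 / (p - 1) in
     \<alpha> * (1 / deg w x) * (\<Sum>y\<in>UNIV. w x y * (u x - u y))
     + (1 - \<alpha>) * (u x - (Max (u ` nbrs w x) + Min (u ` nbrs w x)) / 2))"

definition solves_P :: "real \<Rightarrow> ('a::finite \<Rightarrow> 'a \<Rightarrow> real) \<Rightarrow> 'a set \<Rightarrow> ('a \<Rightarrow> real) \<Rightarrow> ('a \<Rightarrow> real) \<Rightarrow> bool" where
  "solves_P p w \<Gamma> g u \<longleftrightarrow> (\<forall>x. x \<notin> \<Gamma> \<longrightarrow> Lp p w u x = 0) \<and> (\<forall>x\<in>\<Gamma>. u x = g x)"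

definition delta :: "('a::finite \<Rightarrow> 'a \<Rightarrow> real) \<Rightarrow> 'a set \<Rightarrow> real" where
  "delta w \<Gamma> = Min (range (\<lambda>x. (\<Sum>y\<in>UNIV. w x y * (if y \<in> \<Gamma> then 1 else 0)) / (\<Sum>z\<in>UNIV. w x z)))"

definition Xset :: "('a \<Rightarrow> real) \<Rightarrow> real \<Rightarrow> 'a set" where
  "Xset g i = {x. g x = i}"

definition Aset_i :: "('a \<Rightarrow> 'a \<Rightarrow> real) \<Rightarrow> ('a \<Rightarrow> real) \<Rightarrow> nat \<Rightarrow> real \<Rightarrow> 'a set" where
  "Aset_i w g m i = {x \<in> Xset g i. setdist w x (Xset g (1 - i)) \<le> enat m}"

definition Aset :: "('a \<Rightarrow> 'a \<Rightarrow> real) \<Rightarrow> ('a \<Rightarrow> real) \<Rightarrow> nat \<Rightarrow> 'a set" where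
  "Aset w g m = Aset_i w g m 0 \<union> Aset_i w g m 1"

end

theory Submission
  imports Defs
begin

lemma walk_ext:
  assumes "walk w x y n" "w y z > 0"
  shows "walk w x z (Suc n)"
proof -
  obtain f where f: "f 0 = x" "f n = y" "\<forall>i<n. w (f i) (f (Suc i)) > 0"
    using assms(1) unfolding walk_def by blast
  define f' where "f' = f(Suc n := z)"
  have "f' 0 = x" "f' (Suc n) = z" using f by (auto simp: f'_def)
  moreover have "\<forall>i<Suc n. w (f' i) (f' (Suc i)) > 0"
  proof (intro allI impI)
    fix i assume "i < Suc n"
    then show "w (f' i) (f' (Suc i)) > 0"
      using f assms(2) by (cases "i = n") (auto simp: f'_def)
  qed
  ultimately show ?thesis unfolding walk_def by blast
qed

lemma walk0: "walk w x x 0"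
  unfolding walk_def by (rule exI[of _ "\<lambda>_. x"]) simp

lemma deg_pos:
  fixes w :: "'a::finite \<Rightarrow> 'a \<Rightarrow> real"
  assumes w_nonneg: "\<forall>x y. w x y \<ge> 0" and A1: "\<forall>x. \<Gamma> \<inter> nbrs w x \<noteq> {}"
  shows "deg w y > 0"
proof -
  obtain z where z: "z \<in> \<Gamma>" "w y z > 0" using A1 unfolding nbrs_def by blast
  have "w y z \<le> deg w y" unfolding deg_def
    by (rule member_le_sum) (use w_nonneg in auto)
  then show ?thesis using z by linarith
qed

lemma maxp:
  fixes w :: "'a::finite \<Rightarrow> 'a \<Rightarrow> real" and v :: "'a \<Rightarrow> real"
  assumes w_nonneg: "\<forall>x y. w x y \<ge> 0" and A1: "\<forall>x. \<Gamma> \<inter> nbrs w x \<noteq> {}"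
    and al: "0 < \<alpha>" "\<alpha> \<le> 1"
    and EQ: "\<forall>y. y \<notin> \<Gamma> \<longrightarrow> v y = \<alpha> / deg w y * (\<Sum>z\<in>UNIV. w y z * v z)
               + (1 - \<alpha>) * (Max (v ` nbrs w y) + Min (v ` nbrs w y)) / 2"
    and lab: "\<forall>y\<in>\<Gamma>. v y \<le> 1"
  shows "v y \<le> 1"
proof (rule ccontr)
  assume neg: "\<not> v y \<le> 1"
  define M where "M = Max (range v)"
  have vM: "\<And>y. v y \<le> M" unfolding M_def by simp
  have "M \<in> range v" unfolding M_def by (rule Max_in) auto
  then obtain y0 where y0: "v y0 = M" by auto
  have M1: "M > 1" using vM[of y] neg by linarith
  have y0G: "y0 \<notin> \<Gamma>" using lab y0 M1 by auto
  obtain z where z: "z \<in> \<Gamma>" "w y0 z > 0" using A1 unfolding nbrs_def by blast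
  have d: "deg w y0 > 0" by (rule deg_pos[OF w_nonneg A1])
  have fin: "finite (nbrs w y0)" by simp
  have ne: "nbrs w y0 \<noteq> {}" using z unfolding nbrs_def by auto
  have S: "(\<Sum>z\<in>UNIV. w y0 z * v z) < (\<Sum>z\<in>UNIV. w y0 z * M)"
  proof (rule sum_strict_mono_ex1)
    show "\<forall>x\<in>UNIV. w y0 x * v x \<le> w y0 x * M"
      using w_nonneg vM by (simp add: mult_left_mono)
    have "v z \<le> 1" using lab z by auto
    then show "\<exists>a\<in>UNIV. w y0 a * v a < w y0 a * M" using z M1
      by (intro bexI[of _ z]) auto
  qed auto
  have dM: "(\<Sum>z\<in>UNIV. w y0 z * M) = deg w y0 * M"
    unfolding deg_def by (simp add: sum_distrib_right)
  have Mx: "Max (v ` nbrs w y0) \<le> M" using fin ne vM by auto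
  have Mn: "Min (v ` nbrs w y0) \<le> M" using fin ne vM
    by (meson Min_le finite_imageI imageI ex_in_conv order_trans)
  have t1: "\<alpha> / deg w y0 * (\<Sum>z\<in>UNIV. w y0 z * v z) < \<alpha> * M"
  proof -
    have "\<alpha> / deg w y0 * (\<Sum>z\<in>UNIV. w y0 z * v z) < \<alpha> / deg w y0 * (deg w y0 * M)"
      using S dM d al by (intro mult_strict_left_mono) auto
    also have "\<dots> = \<alpha> * M" using d by simp
    finally show ?thesis .
  qed
  have t2: "(1 - \<alpha>) * (Max (v ` nbrs w y0) + Min (v ` nbrs w y0)) / 2 \<le> (1 - \<alpha>) * M"
  proof -
    have "(1 - \<alpha>) * (Max (v ` nbrs w y0) + Min (v ` nbrs w y0)) \<le> (1 - \<alpha>) * (2 * M)"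
      using Mx Mn al by (intro mult_left_mono) auto
    then show ?thesis by simp
  qed
  have e: "v y0 = \<alpha> / deg w y0 * (\<Sum>z\<in>UNIV. w y0 z * v z)
               + (1 - \<alpha>) * (Max (v ` nbrs w y0) + Min (v ` nbrs w y0)) / 2"
    using EQ y0G by blast
  have "v y0 < M" using e t1 t2 by (simp add: algebra_simps)
  then show False using y0 by simp
qed

lemma step_arith:
  fixes \<alpha> d S Mx Mn Q \<delta> vy :: real
  assumes "0 < \<alpha>" "\<alpha> \<le> 1" "d > 0"
    and e: "vy = \<alpha> / d * S + (1 - \<alpha>) * (Mx + Mn) / 2"
    and S: "S \<le> (1 - \<delta>) * d * Q" and "Mx \<le> Q" "Mn \<le> 0"
  shows "vy \<le> (1 - (1 - \<alpha> + 2 * \<alpha> * \<delta>) / 2) * Q"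
proof -
  have "\<alpha> / d * S \<le> \<alpha> / d * ((1 - \<delta>) * d * Q)"
    using assms by (intro mult_left_mono) auto
  also have "\<dots> = \<alpha> * (1 - \<delta>) * Q" using assms by simp
  finally have a: "\<alpha> / d * S \<le> \<alpha> * (1 - \<delta>) * Q" .
  have b: "(1 - \<alpha>) * (Mx + Mn) \<le> (1 - \<alpha>) * Q"
    using assms by (intro mult_left_mono) auto
  have id: "(1 - (1 - \<alpha> + 2 * \<alpha> * \<delta>) / 2) * Q = \<alpha> * (1 - \<delta>) * Q + (1 - \<alpha>) * Q / 2"
    by (simp add: field_simps)
  show ?thesis unfolding id using e a b by linarith
qed

lemma decay:
  fixes w :: "'a::finite \<Rightarrow> 'a \<Rightarrow> real" and v h :: "'a \<Rightarrow> real"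
  assumes w_nonneg: "\<forall>x y. w x y \<ge> 0" and A1: "\<forall>x. \<Gamma> \<inter> nbrs w x \<noteq> {}"
    and al: "0 < \<alpha>" "\<alpha> \<le> 1"
    and EQ: "\<forall>y. y \<notin> \<Gamma> \<longrightarrow> v y = \<alpha> / deg w y * (\<Sum>z\<in>UNIV. w y z * v z)
               + (1 - \<alpha>) * (Max (v ` nbrs w y) + Min (v ` nbrs w y)) / 2"
    and lab: "\<forall>y\<in>\<Gamma>. v y = h y"
    and v1: "\<forall>y. v y \<le> 1"
    and zero: "\<forall>z n. walk w x z n \<and> n \<le> k \<longrightarrow> h z = 0"
    and dl: "\<delta> \<le> 1"
    and dlow: "\<forall>y. \<delta> \<le> (\<Sum>z\<in>UNIV. w y z * (if z \<in> \<Gamma> then 1 else 0)) / deg w y"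
  shows "v x \<le> (1 - (1 - \<alpha> + 2 * \<alpha> * \<delta>) / 2) ^ k"
proof -
  define q where "q = 1 - (1 - \<alpha> + 2 * \<alpha> * \<delta>) / 2"
  have q0: "q \<ge> 0"
  proof -
    have eq: "1 - (1 - \<alpha> + 2 * \<alpha> * \<delta>) / 2 = (1 + \<alpha>) / 2 - \<alpha> * \<delta>" by (simp add: field_simps)
    have "\<alpha> * \<delta> \<le> \<alpha>" using mult_left_mono[of \<delta> 1 \<alpha>] al dl by simp
    moreover have "\<alpha> \<le> (1 + \<alpha>) / 2" using al by simp
    ultimately have "\<alpha> * \<delta> \<le> (1 + \<alpha>) / 2" by (rule order_trans)
    then show ?thesis unfolding q_def eq by simp
  qed
  have claim: "\<forall>y n. walk w x y n \<longrightarrow> n + j \<le> k \<longrightarrow> v y \<le> q ^ j" for j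
  proof (induction j)
    case 0
    then show ?case using v1 by simp
  next
    case (Suc j)
    show ?case
    proof (intro allI impI)
      fix y n assume wk: "walk w x y n" and nk: "n + Suc j \<le> k"
      show "v y \<le> q ^ Suc j"
      proof (cases "y \<in> \<Gamma>")
        case True
        have "n \<le> k" using nk by simp
        then have "v y = 0" using lab zero wk True by auto
        then show ?thesis using q0 by simp
      next
        case False
        define Q where "Q = q ^ j"
        have Q0: "Q \<ge> 0" unfolding Q_def using q0 by simp
        have nb: "v z \<le> Q" if "w y z > 0" for z
        proof -
          have "walk w x z (Suc n)" using walk_ext[OF wk that] .
          moreover have "Suc n + j \<le> k" using nk by simp
          ultimately show ?thesis using Suc.IH unfolding Q_def by blast
        qed
        have nbG: "v z = 0" if "w y z > 0" "z \<in> \<Gamma>" for z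
        proof -
          have "walk w x z (Suc n)" using walk_ext[OF wk that(1)] .
          moreover have "Suc n \<le> k" using nk by simp
          ultimately show ?thesis using lab zero that(2) by auto
        qed
        have d: "deg w y > 0" by (rule deg_pos[OF w_nonneg A1])
        obtain z0 where z0: "z0 \<in> \<Gamma>" "w y z0 > 0" using A1 unfolding nbrs_def by blast
        have fin: "finite (nbrs w y)" by simp
        have ne: "nbrs w y \<noteq> {}" using z0 unfolding nbrs_def by auto
        have Mx: "Max (v ` nbrs w y) \<le> Q" using fin ne nb unfolding nbrs_def by auto
        have "Min (v ` nbrs w y) \<le> v z0" using z0 fin unfolding nbrs_def by (intro Min_le) auto
        then have Mn: "Min (v ` nbrs w y) \<le> 0" using nbG z0 by simp
        define L where "L = (\<Sum>z\<in>UNIV. w y z * (if z \<in> \<Gamma> then 1 else 0))"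
        have "\<delta> \<le> L / deg w y" using dlow unfolding L_def by blast
        then have dL: "\<delta> * deg w y \<le> L" using d by (simp add: field_simps)
        have "(\<Sum>z\<in>UNIV. w y z * v z) \<le> (\<Sum>z\<in>UNIV. w y z * Q - Q * (w y z * (if z \<in> \<Gamma> then 1 else 0)))"
        proof (rule sum_mono)
          fix z :: 'a
          show "w y z * v z \<le> w y z * Q - Q * (w y z * (if z \<in> \<Gamma> then 1 else 0))"
          proof (cases "w y z > 0")
            case True
            then show ?thesis using nb[OF True] nbG[OF True]
              by (cases "z \<in> \<Gamma>") (auto intro: mult_left_mono)
          next
            case False
            then have "w y z = 0" using w_nonneg by (metis less_eq_real_def)
            then show ?thesis by simp
          qed
        qed
        also have "\<dots> = deg w y * Q - Q * L"
          unfolding L_def deg_def by (simp add: sum_subtractf sum_distrib_left sum_distrib_right)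
        also have "\<dots> \<le> deg w y * Q - Q * (\<delta> * deg w y)"
          using dL Q0 by (simp add: mult_left_mono)
        also have "\<dots> = (1 - \<delta>) * deg w y * Q" by (simp add: algebra_simps)
        finally have S: "(\<Sum>z\<in>UNIV. w y z * v z) \<le> (1 - \<delta>) * deg w y * Q" .
        have e: "v y = \<alpha> / deg w y * (\<Sum>z\<in>UNIV. w y z * v z)
               + (1 - \<alpha>) * (Max (v ` nbrs w y) + Min (v ` nbrs w y)) / 2"
          using EQ False by blast
        have "v y \<le> q * Q" unfolding q_def
          by (rule step_arith[OF al d e S Mx Mn])
        then show ?thesis unfolding Q_def by simp
      qed
    qed
  qed
  show ?thesis using claim[of k] walk0[of w x] unfolding q_def by auto
qed

lemma setdist_walk:
  assumes "walk w x z n" "z \<in> A"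
  shows "setdist w x A \<le> enat n"
proof -
  have "gdist w x z \<le> n" unfolding gdist_def using assms(1) by (rule Least_le)
  moreover have "setdist w x A \<le> enat (gdist w x z)" unfolding setdist_def
    using assms(2) by (rule INF_lower)
  ultimately show ?thesis by (meson enat_ord_simps(1) order_trans)
qed

lemma Lp_eq:
  fixes w :: "'a::finite \<Rightarrow> 'a \<Rightarrow> real"
  assumes "Lp p w u y = 0" "deg w y > 0"
  shows "u y = 1 / (p - 1) / deg w y * (\<Sum>z\<in>UNIV. w y z * u z)
          + (1 - 1 / (p - 1)) * (Max (u ` nbrs w y) + Min (u ` nbrs w y)) / 2"
proof -
  define \<alpha> where "\<alpha> = 1 / (p - 1)"
  define d where "d = deg w y"
  define S where "S = (\<Sum>z\<in>UNIV. w y z * u z)"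
  define Mx where "Mx = Max (u ` nbrs w y)"
  define Mn where "Mn = Min (u ` nbrs w y)"
  have sum: "(\<Sum>z\<in>UNIV. w y z * (u y - u z)) = d * u y - S"
    unfolding d_def S_def deg_def by (simp add: right_diff_distrib sum_subtractf sum_distrib_right)
  have "\<alpha> * (1 / d) * (d * u y - S) + (1 - \<alpha>) * (u y - (Mx + Mn) / 2) = 0"
    using assms(1) unfolding Lp_def Let_def \<alpha>_def[symmetric] sum Mx_def Mn_def d_def .
  moreover have "\<alpha> * (1 / d) * (d * u y - S) = \<alpha> * u y - \<alpha> / d * S"
    using assms(2) unfolding d_def by (simp add: field_simps)
  ultimately have "u y = \<alpha> / d * S + (1 - \<alpha>) * (Mx + Mn) / 2"
    by (simp add: algebra_simps)
  then show ?thesis unfolding \<alpha>_def d_def S_def Mx_def Mn_def .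
qed

lemma Max_neg:
  fixes A :: "real set"
  assumes "finite A" "A \<noteq> {}"
  shows "Max ((\<lambda>t. 1 - t) ` A) = 1 - Min A" "Min ((\<lambda>t. 1 - t) ` A) = 1 - Max A"
proof -
  show "Max ((\<lambda>t. 1 - t) ` A) = 1 - Min A"
    by (rule Max_eqI) (use assms in \<open>auto intro: imageI Min_in\<close>)
  show "Min ((\<lambda>t. 1 - t) ` A) = 1 - Max A"
    by (rule Min_eqI) (use assms in \<open>auto intro: imageI Max_in\<close>)
qed

lemma flip_arith:
  fixes uy T R a X N :: real
  assumes "uy = T + (1 - a) * (X + N) / 2" "R = a - T"
  shows "1 - uy = R + (1 - a) * ((1 - N) + (1 - X)) / 2"
  using assms by (simp add: field_simps)

theorem mainTheorem6:
  fixes w :: "'a::finite \<Rightarrow> 'a \<Rightarrow> real"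
    and \<Gamma> :: "'a set" and g u :: "'a \<Rightarrow> real" and p :: real and k :: nat
  assumes p: "p \<ge> 2"
    and w_nonneg: "\<forall>x y. w x y \<ge> 0"
    and w_sym: "\<forall>x y. w x y = w y x"
    and conn: "connected_graph w"
    and A1: "\<forall>x. \<Gamma> \<inter> nbrs w x \<noteq> {}"
    and g01: "\<forall>x. g x \<in> {0, 1}"
    and sol: "solves_P p w \<Gamma> g u"
    and k_def: "k = (LEAST n::nat. real n > 2 * ln 2 / (1 - 1 / (p - 1) + 2 * (1 / (p - 1)) * delta w \<Gamma>))"
  shows "\<forall>x. x \<notin> Aset w g k \<longrightarrow> g x = (if u x \<ge> 1/2 then 1 else 0)"
proof (intro allI impI)
  fix x assume xA: "x \<notin> Aset w g k"
  define \<alpha> where "\<alpha> = 1 / (p - 1)"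
  define \<delta> where "\<delta> = delta w \<Gamma>"
  have al: "0 < \<alpha>" "\<alpha> \<le> 1" unfolding \<alpha>_def using p by auto
  have dpos: "\<And>y. deg w y > 0" by (rule deg_pos[OF w_nonneg A1])
  have EQu: "\<forall>y. y \<notin> \<Gamma> \<longrightarrow> u y = \<alpha> / deg w y * (\<Sum>z\<in>UNIV. w y z * u z)
               + (1 - \<alpha>) * (Max (u ` nbrs w y) + Min (u ` nbrs w y)) / 2"
    using sol Lp_eq[OF _ dpos] unfolding solves_P_def \<alpha>_def by blast
  have labu: "\<forall>y\<in>\<Gamma>. u y = g y" using sol unfolding solves_P_def by blast
  define v where "v = (\<lambda>y. 1 - u y)"
  have EQv: "\<forall>y. y \<notin> \<Gamma> \<longrightarrow> v y = \<alpha> / deg w y * (\<Sum>z\<in>UNIV. w y z * v z)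
               + (1 - \<alpha>) * (Max (v ` nbrs w y) + Min (v ` nbrs w y)) / 2"
  proof (intro allI impI)
    fix y assume y: "y \<notin> \<Gamma>"
    obtain z0 where z0: "z0 \<in> nbrs w y" using A1 by blast
    have ne: "u ` nbrs w y \<noteq> {}" using z0 by auto
    have im: "v ` nbrs w y = (\<lambda>t. 1 - t) ` (u ` nbrs w y)" unfolding v_def by (simp add: image_image)
    have Mx: "Max (v ` nbrs w y) = 1 - Min (u ` nbrs w y)"
      unfolding im by (rule Max_neg(1)) (use ne in auto)
    have Mn: "Min (v ` nbrs w y) = 1 - Max (u ` nbrs w y)"
      unfolding im by (rule Max_neg(2)) (use ne in auto)
    have S: "(\<Sum>z\<in>UNIV. w y z * v z) = deg w y - (\<Sum>z\<in>UNIV. w y z * u z)"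
      unfolding v_def deg_def by (simp add: right_diff_distrib sum_subtractf)
    have e: "u y = \<alpha> / deg w y * (\<Sum>z\<in>UNIV. w y z * u z)
               + (1 - \<alpha>) * (Max (u ` nbrs w y) + Min (u ` nbrs w y)) / 2"
      using EQu y by blast
    have "\<alpha> / deg w y * (deg w y - (\<Sum>z\<in>UNIV. w y z * u z)) = \<alpha> - \<alpha> / deg w y * (\<Sum>z\<in>UNIV. w y z * u z)"
      using dpos[of y] by (simp add: field_simps)
    then show "v y = \<alpha> / deg w y * (\<Sum>z\<in>UNIV. w y z * v z)
               + (1 - \<alpha>) * (Max (v ` nbrs w y) + Min (v ` nbrs w y)) / 2"
      unfolding Mx Mn S using flip_arith[OF e] by (simp only: v_def)
  qed
  have labv: "\<forall>y\<in>\<Gamma>. v y = 1 - g y" using labu unfolding v_def by auto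
  have gy: "0 \<le> g y \<and> g y \<le> 1" for y using g01 by (cases "g y = 0") auto
  have lu: "\<forall>y\<in>\<Gamma>. u y \<le> 1" using labu gy by simp
  have lv: "\<forall>y\<in>\<Gamma>. v y \<le> 1" using labv gy by simp
  have u1: "\<forall>y. u y \<le> 1"
  proof
    fix y show "u y \<le> 1" by (rule maxp[OF w_nonneg A1 al EQu]) (use lu in blast)
  qed
  have v1: "\<forall>y. v y \<le> 1"
  proof
    fix y show "v y \<le> 1" by (rule maxp[OF w_nonneg A1 al EQv]) (use lv in blast)
  qed
  define F where "F = (\<lambda>x. (\<Sum>y\<in>UNIV. w x y * (if y \<in> \<Gamma> then 1 else 0)) / (\<Sum>z\<in>UNIV. w x z))"
  have \<delta>F: "\<delta> = Min (range F)" unfolding \<delta>_def delta_def F_def ..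
  have dlow: "\<forall>y. \<delta> \<le> (\<Sum>z\<in>UNIV. w y z * (if z \<in> \<Gamma> then 1 else 0)) / deg w y"
    unfolding \<delta>F deg_def F_def by auto
  have F1: "F y \<le> 1" for y
  proof -
    have "(\<Sum>z\<in>UNIV. w y z * (if z \<in> \<Gamma> then 1 else 0)) \<le> (\<Sum>z\<in>UNIV. w y z)"
      by (rule sum_mono) (use w_nonneg in auto)
    then show ?thesis unfolding F_def using dpos[of y] unfolding deg_def by simp
  qed
  have Fpos: "F y > 0" for y
  proof -
    obtain z where z: "z \<in> \<Gamma>" "w y z > 0" using A1 unfolding nbrs_def by blast
    have "w y z * (if z \<in> \<Gamma> then 1 else 0) \<le> (\<Sum>z\<in>UNIV. w y z * (if z \<in> \<Gamma> then 1 else 0))"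
      by (rule member_le_sum) (use w_nonneg in auto)
    then show ?thesis unfolding F_def using dpos[of y] z unfolding deg_def by simp
  qed
  have "\<delta> \<in> range F" unfolding \<delta>F by (rule Min_in) auto
  then have dl: "\<delta> \<le> 1" and dp: "\<delta> > 0" using F1 Fpos by auto
  define c where "c = (1 - \<alpha> + 2 * \<alpha> * \<delta>) / 2"
  define q where "q = 1 - (1 - \<alpha> + 2 * \<alpha> * \<delta>) / 2"
  have qc: "q = 1 - c" unfolding q_def c_def ..
  define t where "t = \<alpha> * \<delta>"
  have tp: "t > 0" unfolding t_def using al dp by simp
  have ceq: "c = (1 - \<alpha> + 2 * t) / 2" unfolding c_def t_def by simp
  have cpos: "c > 0" unfolding ceq using al tp by simp
  have "\<alpha> * \<delta> \<le> \<alpha>" using mult_left_mono[of \<delta> 1 \<alpha>] al dl by simp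
  moreover have "\<alpha> \<le> (1 + \<alpha>) / 2" using al by simp
  ultimately have ad: "\<alpha> * \<delta> \<le> (1 + \<alpha>) / 2" by (rule order_trans)
  have eqq: "1 - (1 - \<alpha> + 2 * \<alpha> * \<delta>) / 2 = (1 + \<alpha>) / 2 - \<alpha> * \<delta>" by (simp add: field_simps)
  have q0: "q \<ge> 0" unfolding q_def eqq using ad by simp
  have kgt: "real k > 2 * ln 2 / (1 - \<alpha> + 2 * \<alpha> * \<delta>)"
  proof -
    have "\<exists>n::nat. real n > 2 * ln 2 / (1 - \<alpha> + 2 * \<alpha> * \<delta>)" by (rule reals_Archimedean2)
    from LeastI_ex[OF this] show ?thesis unfolding k_def \<alpha>_def \<delta>_def by simp
  qed
  have "2 * ln 2 / (1 - \<alpha> + 2 * \<alpha> * \<delta>) = ln 2 / c" unfolding c_def by simp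
  with kgt have "ln 2 / c < real k" by simp
  then have kc: "ln 2 < real k * c" using cpos by (simp add: divide_less_eq)
  have qk: "q ^ k < 1/2"
  proof -
    have "q \<le> exp (- c)" unfolding qc using exp_ge_add_one_self[of "- c"] by simp
    then have "q ^ k \<le> exp (- c) ^ k" using q0 by (rule power_mono)
    also have "\<dots> = exp (real k * (- c))" by (simp only: exp_of_nat_mult)
    also have "\<dots> < exp (- ln 2)" using kc by simp
    also have "\<dots> = 1/2" by (simp add: exp_minus)
    finally show ?thesis .
  qed
  have g: "g x = 0 \<or> g x = 1" using g01 by auto
  then show "g x = (if u x \<ge> 1/2 then 1 else 0)"
  proof
    assume gx: "g x = 0"
    have zero: "\<forall>z n. walk w x z n \<and> n \<le> k \<longrightarrow> g z = 0"
    proof (intro allI impI)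
      fix z n assume h: "walk w x z n \<and> n \<le> k"
      show "g z = 0"
      proof (rule ccontr)
        assume "g z \<noteq> 0"
        then have "z \<in> Xset g 1" using g01 unfolding Xset_def by auto
        then have "setdist w x (Xset g 1) \<le> enat n" by (rule setdist_walk[OF conjunct1[OF h]])
        also have "\<dots> \<le> enat k" using h by simp
        finally have "x \<in> Aset w g k" unfolding Aset_def Aset_i_def Xset_def using gx by simp
        then show False using xA by simp
      qed
    qed
    have "u x \<le> q ^ k" unfolding q_def
      by (rule decay[OF w_nonneg A1 al EQu labu u1 zero dl dlow])
    then show ?thesis using qk gx by simp
  next
    assume gx: "g x = 1"
    have zero: "\<forall>z n. walk w x z n \<and> n \<le> k \<longrightarrow> 1 - g z = 0"
    proof (intro allI impI)
      fix z n assume h: "walk w x z n \<and> n \<le> k"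
      show "1 - g z = 0"
      proof (rule ccontr)
        assume "1 - g z \<noteq> 0"
        then have "z \<in> Xset g 0" using g01 unfolding Xset_def by auto
        then have "setdist w x (Xset g 0) \<le> enat n" by (rule setdist_walk[OF conjunct1[OF h]])
        also have "\<dots> \<le> enat k" using h by simp
        finally have "x \<in> Aset w g k" unfolding Aset_def Aset_i_def Xset_def using gx by simp
        then show False using xA by simp
      qed
    qed
    have "v x \<le> q ^ k" unfolding q_def
      by (rule decay[OF w_nonneg A1 al EQv labv v1 zero dl dlow])
    then show ?thesis using qk gx unfolding v_def by simp
  qed
qed

end
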